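(* Let $\mathcal{A}$ and $\mathcal{B}$ be unital Banach algebras, $T\in\mathcal{L}^1(\mathcal{A},\mathcal{B})$ and $\Psi\in\mathcal{L}^2(\mathcal{B},\mathcal{B})$. Then $$\|\delta_T^2\,T^{\vee}\|\leq \mathrm{adef}(\Psi)\cdot\|T\|^3.$$
   Context: $\mathcal{L}^n(\mathcal{A},\mathcal{B})$ denotes the space of bounded $n$-linear maps $\mathcal{A}^n\to\mathcal{B}$ with the operator norm. $T^{\vee}\in\mathcal{L}^2(\mathcal{A},\mathcal{B})$ is defined by $T^{\vee}(x,y)=T(xy)-\Psi(T(x),T(y))$. The operator $\delta_T^2:\mathcal{L}^2(\mathcal{A},\mathcal{B})\to\mathcal{L}^3(\mathcal{A},\mathcal{B})$ is defined by $\delta_T^2\phi(x,y,z)=\Psi(T(x),\phi(y,z))-\phi(xy,z)+\phi(x,yz)-\Psi(\phi(x,y),T(z))$. The associative defect is $\mathrm{adef}(\Psi)=\sup\{\|\Psi(u,\Psi(v,w))-\Psi(\Psi(u,v),w)\|: u,v,w\in\mathcal{B},\ \|u\|,\|v\|,\|w\|\leq1\}$. *)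

theory Defs
  imports "HOL-Analysis.Analysis"
begin

definition norm3 :: "('a::real_normed_vector \<Rightarrow> 'a \<Rightarrow> 'a \<Rightarrow> 'b::real_normed_vector) \<Rightarrow> real" where
  "norm3 \<phi> = Sup {norm (\<phi> x y z) | x y z. norm x \<le> 1 \<and> norm y \<le> 1 \<and> norm z \<le> 1}"

definition Tvee :: "('a::real_normed_algebra_1 \<Rightarrow> 'b::real_normed_algebra_1) \<Rightarrow> ('b \<Rightarrow> 'b \<Rightarrow> 'b) \<Rightarrow> 'a \<Rightarrow> 'a \<Rightarrow> 'b" where
  "Tvee T \<Psi> = (\<lambda>x y. T (x * y) - \<Psi> (T x) (T y))"

definition delta2 :: "('a::real_normed_algebra_1 \<Rightarrow> 'b::real_normed_algebra_1) \<Rightarrow> ('b \<Rightarrow> 'b \<Rightarrow> 'b)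
    \<Rightarrow> ('a \<Rightarrow> 'a \<Rightarrow> 'b) \<Rightarrow> 'a \<Rightarrow> 'a \<Rightarrow> 'a \<Rightarrow> 'b" where
  "delta2 T \<Psi> \<phi> = (\<lambda>x y z. \<Psi> (T x) (\<phi> y z) - \<phi> (x * y) z + \<phi> x (y * z) - \<Psi> (\<phi> x y) (T z))"

definition adef :: "('b::real_normed_vector \<Rightarrow> 'b \<Rightarrow> 'b) \<Rightarrow> real" where
  "adef \<Psi> = Sup {norm (\<Psi> u (\<Psi> v w) - \<Psi> (\<Psi> u v) w) | u v w. norm u \<le> 1 \<and> norm v \<le> 1 \<and> norm w \<le> 1}"

end

theory Submission
  imports Defs
begin

lemma adef_bdd:
  assumes "bounded_bilinear \<Psi>"
  shows "bdd_above {norm (\<Psi> u (\<Psi> v w) - \<Psi> (\<Psi> u v) w) | u v w. norm u \<le> 1 \<and> norm v \<le> 1 \<and> norm w \<le> 1}"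
proof -
  interpret b: bounded_bilinear \<Psi> by fact
  obtain K where K: "\<And>a b. norm (\<Psi> a b) \<le> norm a * norm b * K" "K > 0"
    using b.pos_bounded by blast
  have "norm (\<Psi> u (\<Psi> v w) - \<Psi> (\<Psi> u v) w) \<le> 2 * K * K"
    if "norm u \<le> 1" "norm v \<le> 1" "norm w \<le> 1" for u v w
  proof -
    have a: "norm (\<Psi> v w) \<le> K"
    proof -
      have "norm (\<Psi> v w) \<le> norm v * norm w * K" by (rule K(1))
      also have "\<dots> \<le> 1 * 1 * K"
        using that K(2) by (intro mult_right_mono mult_mono) auto
      finally show ?thesis by simp
    qed
    have b: "norm (\<Psi> u v) \<le> K"
    proof -
      have "norm (\<Psi> u v) \<le> norm u * norm v * K" by (rule K(1))
      also have "\<dots> \<le> 1 * 1 * K"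
        using that K(2) by (intro mult_right_mono mult_mono) auto
      finally show ?thesis by simp
    qed
    have c: "norm (\<Psi> u (\<Psi> v w)) \<le> K * K"
    proof -
      have "norm (\<Psi> u (\<Psi> v w)) \<le> norm u * norm (\<Psi> v w) * K" by (rule K(1))
      also have "\<dots> \<le> 1 * K * K"
        using a that K(2) by (intro mult_right_mono mult_mono) auto
      finally show ?thesis by simp
    qed
    have d: "norm (\<Psi> (\<Psi> u v) w) \<le> K * K"
    proof -
      have "norm (\<Psi> (\<Psi> u v) w) \<le> norm (\<Psi> u v) * norm w * K" by (rule K(1))
      also have "\<dots> \<le> K * 1 * K"
        using b that K(2) by (intro mult_right_mono mult_mono) auto
      finally show ?thesis by simp
    qed
    show ?thesis using c d norm_triangle_ineq4[of "\<Psi> u (\<Psi> v w)" "\<Psi> (\<Psi> u v) w"] by linarith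
  qed
  then show ?thesis unfolding bdd_above_def by blast
qed

lemma adef_upper:
  assumes "bounded_bilinear \<Psi>" "norm u \<le> 1" "norm v \<le> 1" "norm w \<le> 1"
  shows "norm (\<Psi> u (\<Psi> v w) - \<Psi> (\<Psi> u v) w) \<le> adef \<Psi>"
  unfolding adef_def
  by (rule cSup_upper[OF _ adef_bdd[OF assms(1)]]) (use assms in blast)

lemma adef_scaled:
  assumes "bounded_bilinear \<Psi>" "c \<ge> 0" "norm u \<le> c" "norm v \<le> c" "norm w \<le> c"
  shows "norm (\<Psi> u (\<Psi> v w) - \<Psi> (\<Psi> u v) w) \<le> adef \<Psi> * c ^ 3"
proof (cases "c = 0")
  case True
  interpret b: bounded_bilinear \<Psi> by fact
  have "u = 0" "v = 0" "w = 0" using assms True by auto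
  moreover have "0 \<le> adef \<Psi>"
    using adef_upper[OF assms(1), of 0 0 0] by (simp add: b.zero_left b.zero_right)
  ultimately show ?thesis using True by (simp add: b.zero_left b.zero_right)
next
  case False
  interpret b: bounded_bilinear \<Psi> by fact
  have cp: "c > 0" using False assms by simp
  define u' where "u' = u /\<^sub>R c"
  define v' where "v' = v /\<^sub>R c"
  define w' where "w' = w /\<^sub>R c"
  have e: "u = c *\<^sub>R u'" "v = c *\<^sub>R v'" "w = c *\<^sub>R w'"
    using cp by (auto simp: u'_def v'_def w'_def)
  have n: "norm u' \<le> 1" "norm v' \<le> 1" "norm w' \<le> 1"
    using cp assms by (auto simp: u'_def v'_def w'_def field_simps)
  have "\<Psi> u (\<Psi> v w) - \<Psi> (\<Psi> u v) w = (c^3) *\<^sub>R (\<Psi> u' (\<Psi> v' w') - \<Psi> (\<Psi> u' v') w')"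
    unfolding e b.scaleR_left b.scaleR_right scaleR_scaleR scaleR_diff_right
    by (simp only: power3_eq_cube mult.assoc)
  then have "norm (\<Psi> u (\<Psi> v w) - \<Psi> (\<Psi> u v) w) = c^3 * norm (\<Psi> u' (\<Psi> v' w') - \<Psi> (\<Psi> u' v') w')"
    using cp by simp
  also have "\<dots> \<le> c^3 * adef \<Psi>"
    using adef_upper[OF assms(1) n] cp by (intro mult_left_mono) auto
  finally show ?thesis by (simp add: mult.commute)
qed

theorem lemma2p1:
  fixes T :: "'a::{real_normed_algebra_1, banach} \<Rightarrow> 'b::{real_normed_algebra_1, banach}"
    and \<Psi> :: "'b \<Rightarrow> 'b \<Rightarrow> 'b"
  assumes "bounded_linear T"
    and "bounded_bilinear \<Psi>"
  shows "norm3 (delta2 T \<Psi> (Tvee T \<Psi>)) \<le> adef \<Psi> * onorm T ^ 3"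
proof -
  interpret t: bounded_linear T by fact
  interpret b: bounded_bilinear \<Psi> by fact
  have key: "norm (delta2 T \<Psi> (Tvee T \<Psi>) x y z) \<le> adef \<Psi> * onorm T ^ 3"
    if "norm x \<le> 1" "norm y \<le> 1" "norm z \<le> 1" for x y z
  proof -
    have eq: "delta2 T \<Psi> (Tvee T \<Psi>) x y z = - (\<Psi> (T x) (\<Psi> (T y) (T z)) - \<Psi> (\<Psi> (T x) (T y)) (T z))"
      unfolding delta2_def Tvee_def by (simp add: b.diff_left b.diff_right mult.assoc algebra_simps)
    have c0: "onorm T \<ge> 0" using onorm_pos_le[OF assms(1)] .
    have nb: "norm (T a) \<le> onorm T" if "norm a \<le> 1" for a
      using onorm[OF assms(1), of a] that c0 mult_left_mono[of "norm a" 1 "onorm T"] by linarith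
    show ?thesis unfolding eq norm_minus_cancel
      by (rule adef_scaled[OF assms(2) c0 nb nb nb]) (use that in auto)
  qed
  show ?thesis unfolding norm3_def
  proof (rule cSup_least)
    show "{norm (delta2 T \<Psi> (Tvee T \<Psi>) x y z) | x y z. norm x \<le> 1 \<and> norm y \<le> 1 \<and> norm z \<le> 1} \<noteq> {}"
    proof -
      have "\<exists>x y z. norm (delta2 T \<Psi> (Tvee T \<Psi>) 0 0 0) = norm (delta2 T \<Psi> (Tvee T \<Psi>) x y z) \<and> norm x \<le> 1 \<and> norm y \<le> 1 \<and> norm (z::'a) \<le> 1"
        by (intro exI[of _ 0] conjI refl) simp_all
      then show ?thesis by (simp only: ex_in_conv[symmetric] mem_Collect_eq) blast
    qed
  next
    fix r assume "r \<in> {norm (delta2 T \<Psi> (Tvee T \<Psi>) x y z) | x y z. norm x \<le> 1 \<and> norm y \<le> 1 \<and> norm z \<le> 1}"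
    then obtain x y z where "r = norm (delta2 T \<Psi> (Tvee T \<Psi>) x y z)" "norm x \<le> 1" "norm y \<le> 1" "norm z \<le> 1"
      by blast
    then show "r \<le> adef \<Psi> * onorm T ^ 3" using key by simp
  qed
qed

end
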